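(* Let $k\ge 3$ and let $S_k$ be the $k\times(2^k-1)$ binary matrix whose columns are all the nonzero vectors of $\mathbb{F}_2^k$. Let $C$ be a binary linear $[n,k,d]$ code with generator matrix $G$, let $m\ge 0$ be an integer, and let $C'$ be the binary code generated by the $k\times(m(2^k-1)+n)$ matrix $$G'=[\underbrace{S_k\,|\,S_k\,|\,\cdots\,|\,S_k}_{m}\,|\,G].$$ Then $C$ is a self-orthogonal $[n,k,d]$ code which is optimal with respect to the Griesmer bound if and only if $C'$ is a self-orthogonal $[N,k,D]$ code with $N=m(2^k-1)+n$ and $D=2^{k-1}m+d$ which is optimal with respect to the Griesmer bound. In particular, $C$ is a self-orthogonal Griesmer code if and only if $C'$ is a self-orthogonal Griesmer code.
   Context: All codes are binary linear codes. A code $C$ is self-orthogonal if $C\subseteq C^\perp$ with respect to the standard inner product $\sum x_iy_i$ over $\mathbb{F}_2$. For positive integers $k,d$ let $g(k,d)=\sum_{i=0}^{k-1}\lceil d/2^i\rceil$ (the Griesmer bound says every binary $[n,k,d]$ code has $n\ge g(k,d)$). A binary $[n,k,d]$ code is a Griesmer code if $n=g(k,d)$, and it is optimal with respect to the Griesmer bound if $g(k,d)\le n<g(k,d+1)$. *)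

theory Defs
  imports Main "HOL-Library.Z2"
begin

text \<open>A k x n binary matrix is a function M :: nat => nat => bit, where M i j is the
entry in row i < k and column j < n (other entries are irrelevant).\<close>

type_synonym bmat = "nat \<Rightarrow> nat \<Rightarrow> bit"

definition gen_code :: "nat \<Rightarrow> nat \<Rightarrow> bmat \<Rightarrow> bit list set" where
  "gen_code k n M = {map (\<lambda>j. \<Sum>i<k. u i * M i j) [0..<n] | u. True}"

definition weight :: "bit list \<Rightarrow> nat" where
  "weight v = length (filter (\<lambda>x. x \<noteq> 0) v)"

definition inner :: "bit list \<Rightarrow> bit list \<Rightarrow> bit" where
  "inner x y = (\<Sum>i<length x. x ! i * y ! i)"

definition self_orthogonal :: "bit list set \<Rightarrow> bool" where
  "self_orthogonal C \<longleftrightarrow> (\<forall>x\<in>C. \<forall>y\<in>C. inner x y = 0)"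

definition is_code :: "bit list set \<Rightarrow> nat \<Rightarrow> nat \<Rightarrow> nat \<Rightarrow> bool" where
  "is_code C n k d \<longleftrightarrow>
     (\<forall>v\<in>C. length v = n) \<and> replicate n 0 \<in> C \<and>
     (\<forall>x\<in>C. \<forall>y\<in>C. map2 (+) x y \<in> C) \<and>
     card C = 2 ^ k \<and>
     d = Min (weight ` (C - {replicate n 0}))"

definition griesmer :: "nat \<Rightarrow> nat \<Rightarrow> nat" where
  "griesmer k d = (\<Sum>i<k. (d + 2 ^ i - 1) div 2 ^ i)"  \<comment> \<open>sum of ceil(d/2^i)\<close>

definition griesmer_optimal :: "nat \<Rightarrow> nat \<Rightarrow> nat \<Rightarrow> bool" where
  "griesmer_optimal n k d \<longleftrightarrow> griesmer k d \<le> n \<and> n < griesmer k (d + 1)"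

definition griesmer_code :: "nat \<Rightarrow> nat \<Rightarrow> nat \<Rightarrow> bool" where
  "griesmer_code n k d \<longleftrightarrow> n = griesmer k d"

text \<open>Simplex-type matrix S_k: column j (0 <= j < 2^k - 1) is the binary expansion
of j+1, so the columns are exactly the nonzero vectors of F_2^k.\<close>
definition simplex_mat :: "nat \<Rightarrow> bmat" where
  "simplex_mat k i j = (if odd ((j + 1) div 2 ^ i) then 1 else 0)"

definition ext_mat :: "nat \<Rightarrow> nat \<Rightarrow> bmat \<Rightarrow> bmat" where
  "ext_mat k m G i j =
     (if j < m * (2 ^ k - 1) then simplex_mat k i (j mod (2 ^ k - 1))
      else G i (j - m * (2 ^ k - 1)))"

end

theory Submission imports Defs "HOL-Library.FuncSet" begin

definition bv :: "nat \<Rightarrow> nat \<Rightarrow> bit" where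
  "bv x i = (if odd (x div 2 ^ i) then 1 else 0)"

definition fk :: "nat \<Rightarrow> (nat \<Rightarrow> bit) \<Rightarrow> nat \<Rightarrow> bit" where
  "fk k u x = (\<Sum>i<k. u i * bv x i)"

definition ind :: "bool \<Rightarrow> nat" where
  "ind b = (if b then 1 else 0)"

lemma sum_split_add: "(\<Sum>x<(a::nat)+b. F x) = (\<Sum>x<a. F x) + (\<Sum>x<b. F (x+a))"
  by (induction b) (simp_all add: ac_simps)

lemma sum_split_pow: "(\<Sum>x<2^Suc k. F x) = (\<Sum>x<2^k. F x) + (\<Sum>x<2^k. F (x+(2::nat)^k))"
  using sum_split_add[of F "2^k" "2^k"] by (simp add: mult_2)

lemma bv_high: assumes "x < 2^k" "i < k" shows "bv (x + 2^k) i = bv x i"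
proof -
  have "(2::nat)^k = 2^(k-i) * 2^i" using assms(2) by (simp add: power_add[symmetric])
  then have "(x + 2^k) div 2^i = x div 2^i + 2^(k-i)" by simp
  moreover have "even ((2::nat)^(k-i))" using assms(2) by simp
  ultimately show ?thesis unfolding bv_def by simp
qed

lemma bv_top0: "x < 2^k \<Longrightarrow> bv x k = 0"
  unfolding bv_def by simp

lemma bv_top1: "x < 2^k \<Longrightarrow> bv (x + 2^k) k = 1"
proof -
  assume "x < 2^k"
  then have "(x + 2^k) div 2^k = 1" by (simp add: div_add_self2)
  then show ?thesis unfolding bv_def by simp
qed

lemma bv0: "bv 0 i = 0" unfolding bv_def by simp

lemma fk0: "fk k u 0 = 0" unfolding fk_def by (simp add: bv0)

lemma fk_low: "x < 2^k \<Longrightarrow> fk (Suc k) u x = fk k u x"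
  unfolding fk_def by (simp add: bv_top0)

lemma fk_high: "x < 2^k \<Longrightarrow> fk (Suc k) u (x + 2^k) = fk k u x + u k"
  unfolding fk_def by (simp add: bv_top1 bv_high)

lemma bit_cases2: "(x::bit) = 0 \<or> x = 1" by auto

lemma gen_id1: fixes f :: "nat \<Rightarrow> 'a::comm_ring_1"
  shows "(\<Sum>x\<in>A. f x) + (\<Sum>x\<in>A. f x + c) = 2 * (\<Sum>x\<in>A. f x) + of_nat (card A) * c"
  by (simp add: algebra_simps sum.distrib)

lemma gen_id2: fixes f g :: "nat \<Rightarrow> 'a::comm_ring_1"
  shows "(\<Sum>x\<in>A. f x * g x) + (\<Sum>x\<in>A. (f x + c) * (g x + e)) =
    2 * (\<Sum>x\<in>A. f x * g x) + (\<Sum>x\<in>A. f x) * e + (\<Sum>x\<in>A. g x) * c + of_nat (card A) * (c * e)"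
  by (simp add: algebra_simps sum.distrib sum_distrib_right sum_distrib_left)

lemma of_nat_pow2_bit: "j \<ge> 1 \<Longrightarrow> (of_nat (2^j) :: bit) = 0"
  by (cases j) simp_all

lemma sum_fk_zero: "k \<ge> 2 \<Longrightarrow> (\<Sum>x<2^k. fk k u x) = 0"
proof -
  assume "k \<ge> 2"
  then obtain j where j: "k = Suc j" "j \<ge> 1" by (cases k) auto
  have "(\<Sum>x<2^Suc j. fk (Suc j) u x) = (\<Sum>x<2^j. fk (Suc j) u x) + (\<Sum>x<2^j. fk (Suc j) u (x+2^j))"
    by (rule sum_split_pow)
  also have "\<dots> = (\<Sum>x<2^j. fk j u x) + (\<Sum>x<2^j. fk j u x + u j)"
    by (intro arg_cong2[where f="(+)"] sum.cong) (auto simp: fk_low fk_high)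
  also have "\<dots> = 2 * (\<Sum>x<2^j. fk j u x) + of_nat (2^j) * u j"
    by (simp only: gen_id1 card_lessThan)
  also have "\<dots> = 0" using j(2) by (simp only: of_nat_pow2_bit bit_2_eq_0 mult_zero_left add_0_left)
  finally show ?thesis using j by simp
qed

lemma inner_fk_zero: "k \<ge> 3 \<Longrightarrow> (\<Sum>x<2^k. fk k u x * fk k v x) = 0"
proof -
  assume "k \<ge> 3"
  then obtain j where j: "k = Suc j" "j \<ge> 2" by (cases k) auto
  have "(\<Sum>x<2^Suc j. fk (Suc j) u x * fk (Suc j) v x) =
     (\<Sum>x<2^j. fk (Suc j) u x * fk (Suc j) v x) + (\<Sum>x<2^j. fk (Suc j) u (x+2^j) * fk (Suc j) v (x+2^j))"
    by (rule sum_split_pow)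
  also have "\<dots> =
     (\<Sum>x<2^j. fk j u x * fk j v x) + (\<Sum>x<2^j. (fk j u x + u j) * (fk j v x + v j))"
    by (intro arg_cong2[where f="(+)"] sum.cong) (auto simp: fk_low fk_high)
  also have "\<dots> = 2 * (\<Sum>x<2^j. fk j u x * fk j v x) + (\<Sum>x<2^j. fk j u x) * v j + (\<Sum>x<2^j. fk j v x) * u j + of_nat (2^j) * (u j * v j)"
    by (simp only: gen_id2 card_lessThan)
  also have "\<dots> = 0" using j(2) sum_fk_zero[of j] of_nat_pow2_bit[of j]
    by (simp only: bit_2_eq_0 mult_zero_left add_0_left mult_zero_right add_0_right)
  finally show ?thesis using j by simp
qed

lemma weight_fk: "\<exists>i<k. u i \<noteq> 0 \<Longrightarrow> (\<Sum>x<2^k. ind (fk k u x \<noteq> 0)) = 2^(k-1)"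
proof (induction k)
  case 0 then show ?case by simp
next
  case (Suc k)
  have split: "(\<Sum>x<2^Suc k. ind (fk (Suc k) u x \<noteq> 0)) =
     (\<Sum>x<2^k. ind (fk k u x \<noteq> 0)) + (\<Sum>x<2^k. ind (fk k u x + u k \<noteq> 0))"
    unfolding sum_split_pow
    by (intro arg_cong2[where f="(+)"] sum.cong) (auto simp del: bit_not_zero_iff simp: fk_low fk_high)
  show ?case
  proof (cases "u k = 0")
    case True
    then obtain i where "i < k" "u i \<noteq> 0" using Suc.prems less_Suc_eq by auto
    then have "(\<Sum>x<2^k. ind (fk k u x \<noteq> 0)) = 2^(k-1)" "k \<ge> 1" using Suc.IH by auto
    then show ?thesis using split True
      by (cases k) simp_all
  next
    case False
    then have uk: "u k = 1" by simp
    have "\<And>a::bit. ind (a \<noteq> 0) + ind (a + 1 \<noteq> 0) = 1"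
      subgoal for a using bit_cases2[of a] by (auto simp: ind_def)
      done
    then have "(\<Sum>x<2^k. ind (fk k u x \<noteq> 0)) + (\<Sum>x<2^k. ind (fk k u x + u k \<noteq> 0)) = 2^k"
      by (simp add: uk sum.distrib[symmetric])
    then show ?thesis using split by simp
  qed
qed

definition enc :: "nat \<Rightarrow> nat \<Rightarrow> bmat \<Rightarrow> (nat \<Rightarrow> bit) \<Rightarrow> bit list" where
  "enc k n M u = map (\<lambda>j. \<Sum>i<k. u i * M i j) [0..<n]"

lemma gen_code_range: "gen_code k n M = range (enc k n M)"
  by (auto simp: gen_code_def enc_def)

lemma len_enc[simp]: "length (enc k n M u) = n" by (simp add: enc_def)

lemma enc_nth: "j < n \<Longrightarrow> enc k n M u ! j = (\<Sum>i<k. u i * M i j)"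
  unfolding enc_def by simp

lemma len_filter_ind: "length (filter P (map g [0..<n])) = (\<Sum>j<n. ind (P (g j)))"
  by (induction n) (simp_all add: ind_def)

lemma simplex_fk: "(\<Sum>i<k. u i * simplex_mat k i j) = fk k u (j+1)"
  unfolding fk_def simplex_mat_def bv_def by simp

lemma sum_shift_pow: fixes F :: "nat \<Rightarrow> 'a::comm_monoid_add"
  shows "(\<Sum>x<2^k. F x) = F 0 + (\<Sum>j<2^k-1. F (j+1))"
proof -
  have "(2::nat)^k = Suc (2^k-1)" by simp
  then have "(\<Sum>x<2^k. F x) = (\<Sum>x<Suc (2^k-1). F x)" by metis
  also have "\<dots> = F 0 + (\<Sum>j<2^k-1. F (Suc j))" by (rule sum.lessThan_Suc_shift)
  finally show ?thesis by simp
qed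

lemma weight_simplex: "\<exists>i<k. u i \<noteq> 0 \<Longrightarrow> weight (enc k (2^k-1) (simplex_mat k) u) = 2^(k-1)"
proof -
  assume a: "\<exists>i<k. u i \<noteq> 0"
  have "weight (enc k (2^k-1) (simplex_mat k) u) = (\<Sum>j<2^k-1. ind (fk k u (j+1) \<noteq> 0))"
    unfolding weight_def enc_def len_filter_ind simplex_fk ..
  also have "\<dots> = (\<Sum>x<2^k. ind (fk k u x \<noteq> 0))"
    using sum_shift_pow[of "\<lambda>x. ind (fk k u x \<noteq> 0)" k] by (simp add: fk0 ind_def)
  also have "\<dots> = 2^(k-1)" using weight_fk[OF a] .
  finally show ?thesis .
qed

lemma inner_simplex: "k \<ge> 3 \<Longrightarrow> inner (enc k (2^k-1) (simplex_mat k) u) (enc k (2^k-1) (simplex_mat k) v) = 0"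
proof -
  assume a: "k \<ge> 3"
  have "inner (enc k (2^k-1) (simplex_mat k) u) (enc k (2^k-1) (simplex_mat k) v) = (\<Sum>j<2^k-1. fk k u (j+1) * fk k v (j+1))"
    unfolding inner_def len_enc by (rule sum.cong) (simp_all only: enc_nth simplex_fk lessThan_iff)
  also have "\<dots> = (\<Sum>x<2^k. fk k u x * fk k v x)"
    using sum_shift_pow[of "\<lambda>x. fk k u x * fk k v x" k] by (simp add: fk0)
  also have "\<dots> = 0" using inner_fk_zero[OF a] .
  finally show ?thesis .
qed

lemma enc_zero: "\<forall>i<k. u i = 0 \<Longrightarrow> enc k n M u = replicate n 0"
  unfolding enc_def by (simp add: map_replicate_const)

lemma map_periodic:
  "(\<And>j. f j = (if j < m*L then g (j mod L) else h (j - m*L))) \<Longrightarrow>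
    map f [0..<m*L+n] = concat (replicate m (map g [0..<L])) @ map h [0..<n]"
proof (induction m arbitrary: f)
  case 0 then show ?case by simp
next
  case (Suc m)
  have e1: "[0..<L + m * L + n] = [0..<L] @ map (\<lambda>j. j + L) [0..<m*L+n]"
    by (simp add: map_add_upt upt_add_eq_append[symmetric] add.commute add.left_commute)
  have "map (\<lambda>j. f (j + L)) [0..<m*L+n] = concat (replicate m (map g [0..<L])) @ map h [0..<n]"
  proof (rule Suc.IH)
    fix j show "f (j + L) = (if j < m*L then g (j mod L) else h (j - m*L))"
      using Suc.prems[of "j+L"] by auto
  qed
  moreover have "map f [0..<L] = map g [0..<L]"
    using Suc.prems by auto
  ultimately show ?case by (simp add: e1 o_def)
qed

lemma enc_ext: "enc k (m * (2^k-1) + n) (ext_mat k m G) u =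
   concat (replicate m (enc k (2^k-1) (simplex_mat k) u)) @ enc k n G u"
  unfolding enc_def by (rule map_periodic) (simp add: ext_mat_def)

lemma weight_append: "weight (a @ b) = weight a + weight b"
  by (simp add: weight_def)

lemma weight_concat_rep: "weight (concat (replicate m a)) = m * weight a"
  by (induction m) (simp_all add: weight_append, simp add: weight_def)

lemma inner_append: "length a = length c \<Longrightarrow> length b = length d \<Longrightarrow>
   inner (a @ b) (c @ d) = inner a c + inner b d"
  unfolding inner_def using sum_split_add[of "\<lambda>i. (a @ b) ! i * (c @ d) ! i" "length a" "length b"]
  by (simp add: nth_append add.commute)

lemma len_concat_rep: "length (concat (replicate m a)) = m * length a"
  by (induction m) simp_all

lemma inner_concat_rep: "length a = length b \<Longrightarrow>
   inner (concat (replicate m a)) (concat (replicate m b)) = of_nat m * inner a b"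
  by (induction m) (simp_all add: inner_append len_concat_rep algebra_simps, simp add: inner_def)

definition PE :: "nat \<Rightarrow> (nat \<Rightarrow> bit) set" where
  "PE k = PiE {..<k} (\<lambda>_. {0,1})"

lemma enc_restrict: "enc k n M (restrict u {..<k}) = enc k n M u"
  unfolding enc_def by (intro map_cong refl sum.cong) auto

lemma restrict_PE: "restrict u {..<k} \<in> PE k"
  unfolding PE_def using bit_cases2 by (auto simp: PiE_iff)

lemma gen_code_PE: "gen_code k n M = enc k n M ` PE k"
proof -
  have "range (enc k n M) \<subseteq> enc k n M ` PE k"
    using enc_restrict restrict_PE by (metis image_subsetI rev_image_eqI)
  then show ?thesis unfolding gen_code_range by auto
qed

lemma finite_PE: "finite (PE k)" unfolding PE_def by (simp add: finite_PiE)

lemma card_PE: "card (PE k) = 2^k"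
  unfolding PE_def by (simp add: card_PiE numeral_2_eq_2)

lemma inj_from_card: "card (gen_code k n G) = 2^k \<Longrightarrow> inj_on (enc k n G) (PE k)"
  by (rule eq_card_imp_inj_on[OF finite_PE]) (simp add: card_PE gen_code_PE[symmetric])

lemma zero_iff:
  assumes "inj_on (enc k n G) (PE k)"
  shows "enc k n G u = replicate n 0 \<longleftrightarrow> (\<forall>i<k. u i = 0)"
proof
  assume a: "enc k n G u = replicate n 0"
  have z: "enc k n G (\<lambda>_. 0) = replicate n 0" by (rule enc_zero) simp
  have "enc k n G (restrict u {..<k}) = enc k n G (restrict (\<lambda>_. 0) {..<k})"
    by (simp only: enc_restrict a z)
  then have "restrict u {..<k} = restrict (\<lambda>_. 0) {..<k}"
    using assms restrict_PE by (meson inj_on_def)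
  then show "\<forall>i<k. u i = 0" by (metis lessThan_iff restrict_apply')
qed (rule enc_zero)

lemma enc_add: "map2 (+) (enc k n M u) (enc k n M v) = enc k n M (\<lambda>i. u i + v i)"
proof (rule nth_equalityI)
  show "length (map2 (+) (enc k n M u) (enc k n M v)) = length (enc k n M (\<lambda>i. u i + v i))" by simp
  fix j assume "j < length (map2 (+) (enc k n M u) (enc k n M v))"
  then have j: "j < n" by simp
  have "map2 (+) (enc k n M u) (enc k n M v) ! j = enc k n M u ! j + enc k n M v ! j"
    using j by simp
  also have "\<dots> = enc k n M (\<lambda>i. u i + v i) ! j"
    using j by (simp only: enc_nth sum.distrib[symmetric] distrib_right)
  finally show "map2 (+) (enc k n M u) (enc k n M v) ! j = enc k n M (\<lambda>i. u i + v i) ! j" .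
qed

lemma drop_ext: "drop (m * (2^k-1)) (enc k (m * (2^k-1) + n) (ext_mat k m G) u) = enc k n G u"
proof -
  have "length (concat (replicate m (enc k (2^k-1) (simplex_mat k) u))) = m*(2^k-1)"
    by (simp only: len_concat_rep len_enc)
  then show ?thesis by (simp only: enc_ext) (metis append_eq_conv_conj)
qed

lemma griesmer_shift:
  assumes "k \<ge> 1"
  shows "griesmer k (2^(k-1)*m + d) = m*(2^k-1) + griesmer k d"
proof -
  have t: "(2^(k-1)*m + d + 2^i - 1) div 2^i = 2^(k - Suc i) * m + (d + 2^i - 1) div 2^i"
    if "i < k" for i
  proof -
    have "(2::nat)^(k-1) = 2^i * 2^(k - Suc i)" using that by (simp add: power_add[symmetric])
    then have h: "2^(k-1)*m = (2^(k - Suc i) * m) * (2::nat)^i"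
      by (simp add: mult_ac)
    have "(1::nat) \<le> 2^i" by simp
    then have "2^(k-1)*m + d + 2^i - 1 = (d + 2^i - 1) + (2^(k - Suc i) * m) * 2^i"
      using h by linarith
    then show ?thesis by simp
  qed
  have "griesmer k (2^(k-1)*m + d) = (\<Sum>i<k. 2^(k - Suc i) * m + (d + 2^i - 1) div 2^i)"
    unfolding griesmer_def by (intro sum.cong refl t) simp
  also have "\<dots> = (\<Sum>i<k. 2^(k - Suc i)) * m + griesmer k d"
    by (simp add: sum.distrib sum_distrib_right griesmer_def)
  also have "(\<Sum>i<k. (2::nat)^(k - Suc i)) = 2^k - 1"
    using sum_power2[of k] by (simp add: sum.nat_diff_reindex atLeast0LessThan)
  finally show ?thesis by simp
qed


theorem theorem3p4:
  fixes k n d m :: nat and G :: bmat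
  assumes "k \<ge> 3"
    and "is_code (gen_code k n G) n k d"
  shows "((self_orthogonal (gen_code k n G) \<and> is_code (gen_code k n G) n k d
            \<and> griesmer_optimal n k d)
          \<longleftrightarrow>
          (self_orthogonal (gen_code k (m * (2 ^ k - 1) + n) (ext_mat k m G))
            \<and> is_code (gen_code k (m * (2 ^ k - 1) + n) (ext_mat k m G))
                 (m * (2 ^ k - 1) + n) k (2 ^ (k - 1) * m + d)
            \<and> griesmer_optimal (m * (2 ^ k - 1) + n) k (2 ^ (k - 1) * m + d)))
       \<and> ((self_orthogonal (gen_code k n G) \<and> griesmer_code n k d)
          \<longleftrightarrow>
          (self_orthogonal (gen_code k (m * (2 ^ k - 1) + n) (ext_mat k m G))
            \<and> griesmer_code (m * (2 ^ k - 1) + n) k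
                 (Min (weight ` (gen_code k (m * (2 ^ k - 1) + n) (ext_mat k m G)
                         - {replicate (m * (2 ^ k - 1) + n) 0})))))"
proof -
  define L where "L = (2::nat)^k - 1"
  define N where "N = m * L + n"
  define D where "D = 2^(k-1)*m + d"
  define E where "E = enc k N (ext_mat k m G)"
  define F where "F = enc k n G"
  define S where "S = enc k L (simplex_mat k)"
  define C where "C = gen_code k n G"
  define C' where "C' = gen_code k N (ext_mat k m G)"
  have k1: "k \<ge> 1" using assms(1) by simp
  have cardC: "card C = 2^k" and dmin: "d = Min (weight ` (C - {replicate n 0}))"
    using assms(2) unfolding C_def is_code_def by auto
  have inj: "inj_on F (PE k)" using inj_from_card cardC unfolding C_def F_def by blast
  have zF: "F u = replicate n 0 \<longleftrightarrow> (\<forall>i<k. u i = 0)" for u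
    using zero_iff[OF inj[unfolded F_def]] unfolding F_def .
  have EF: "E u = concat (replicate m (S u)) @ F u" for u
    unfolding E_def F_def S_def N_def L_def by (rule enc_ext)
  have dropE: "drop (m * L) (E u) = F u" for u
    unfolding E_def F_def N_def L_def by (rule drop_ext)
  have zE: "E u = replicate N 0 \<longleftrightarrow> (\<forall>i<k. u i = 0)" for u
  proof
    assume "E u = replicate N 0"
    then have "F u = replicate n 0" using dropE[of u] by (simp add: N_def)
    then show "\<forall>i<k. u i = 0" using zF by blast
  next
    assume "\<forall>i<k. u i = 0"
    then show "E u = replicate N 0" unfolding E_def by (rule enc_zero)
  qed
  have injE: "inj_on E (PE k)"
    using inj dropE unfolding inj_on_def by metis
  have innerE: "inner (E u) (E v) = inner (F u) (F v)" for u v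
  proof -
    have "inner (E u) (E v) = inner (concat (replicate m (S u))) (concat (replicate m (S v))) + inner (F u) (F v)"
      unfolding EF by (rule inner_append) (simp_all add: len_concat_rep S_def F_def)
    also have "\<dots> = of_nat m * inner (S u) (S v) + inner (F u) (F v)"
      by (simp add: inner_concat_rep S_def)
    also have "inner (S u) (S v) = 0" unfolding S_def L_def using inner_simplex[OF assms(1)] .
    finally show ?thesis by simp
  qed
  have soC: "self_orthogonal C \<longleftrightarrow> (\<forall>u v. inner (F u) (F v) = 0)"
    unfolding self_orthogonal_def C_def gen_code_range F_def by auto
  have soC': "self_orthogonal C' \<longleftrightarrow> (\<forall>u v. inner (F u) (F v) = 0)"
    unfolding self_orthogonal_def C'_def gen_code_range E_def[symmetric] using innerE by auto
  have so: "self_orthogonal C' \<longleftrightarrow> self_orthogonal C" using soC soC' by simp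
  have wE: "weight (E u) = (if \<exists>i<k. u i \<noteq> 0 then 2^(k-1)*m else 0) + weight (F u)" for u
  proof -
    have "weight (E u) = m * weight (S u) + weight (F u)"
      unfolding EF weight_append weight_concat_rep ..
    moreover have "weight (S u) = (if \<exists>i<k. u i \<noteq> 0 then 2^(k-1) else 0)"
    proof (cases "\<exists>i<k. u i \<noteq> 0")
      case True then show ?thesis unfolding S_def L_def using weight_simplex by simp
    next
      case False
      then have "S u = replicate L 0" unfolding S_def by (intro enc_zero) simp
      then show ?thesis using False by (simp add: weight_def)
    qed
    ultimately show ?thesis by (auto simp del: bit_not_zero_iff)
  qed
  have CF: "C = range F" unfolding C_def F_def gen_code_range ..
  have CE: "C' = range E" unfolding C'_def E_def gen_code_range ..
  have C0: "C - {replicate n 0} = F ` {u. \<exists>i<k. u i \<noteq> 0}"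
    unfolding CF using zF by auto
  have C0': "C' - {replicate N 0} = E ` {u. \<exists>i<k. u i \<noteq> 0}"
    unfolding CE using zE by auto
  have img: "weight ` (C' - {replicate N 0}) = (\<lambda>w. 2^(k-1)*m + w) ` (weight ` (C - {replicate n 0}))"
    unfolding C0 C0' image_image using wE by (intro image_cong refl) simp
  have finC: "finite C" by (rule card_ge_0_finite) (simp add: cardC)
  have neC: "C - {replicate n 0} \<noteq> {}"
  proof
    assume "C - {replicate n 0} = {}"
    then have "C \<subseteq> {replicate n 0}" by blast
    then have "card C \<le> card {replicate n 0}" using card_mono[of "{replicate n 0}" C] by simp
    then have "card C \<le> 1" by simp
    moreover have "(2::nat)^k \<ge> 2^1" using k1 by (intro power_increasing) auto
    ultimately show False using cardC by simp
  qed
  have MinE: "Min (weight ` (C' - {replicate N 0})) = D"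
  proof -
    have "Min (weight ` (C' - {replicate N 0})) = 2^(k-1)*m + Min (weight ` (C - {replicate n 0}))"
      unfolding img
      by (rule mono_Min_commute[symmetric]) (use finC neC in \<open>auto simp: mono_def\<close>)
    then show ?thesis unfolding D_def dmin by simp
  qed
  have cardC': "card C' = 2^k"
    unfolding C'_def gen_code_PE E_def[symmetric] using card_image[OF injE] card_PE by simp
  have codeC': "is_code C' N k D"
    unfolding is_code_def
  proof (intro conjI)
    show "\<forall>v\<in>C'. length v = N" unfolding CE E_def by simp
    show "replicate N 0 \<in> C'" unfolding CE using zE[of "\<lambda>_. 0"] by (metis rangeI)
    show "\<forall>x\<in>C'. \<forall>y\<in>C'. map2 (+) x y \<in> C'" unfolding CE
    proof (intro ballI)
      fix x y assume "x \<in> range E" "y \<in> range E"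
      then obtain u v where "x = E u" "y = E v" by blast
      then show "map2 (+) x y \<in> range E" unfolding E_def by (simp only: enc_add) (rule rangeI)
    qed
    show "card C' = 2^k" by (rule cardC')
    show "D = Min (weight ` (C' - {replicate N 0}))" using MinE by simp
  qed
  have g1: "griesmer k D = m * L + griesmer k d"
    unfolding D_def L_def using griesmer_shift[OF k1] .
  have g2: "griesmer k (D + 1) = m * L + griesmer k (d + 1)"
    unfolding D_def L_def using griesmer_shift[OF k1, of m "d+1"] by (simp add: add.assoc)
  have opt: "griesmer_optimal N k D \<longleftrightarrow> griesmer_optimal n k d"
    unfolding griesmer_optimal_def g1 g2 N_def by auto
  have gc: "griesmer_code N k D \<longleftrightarrow> griesmer_code n k d"
    unfolding griesmer_code_def g1 N_def by auto
  have M: "Min (weight ` (gen_code k (m * (2 ^ k - 1) + n) (ext_mat k m G)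
                         - {replicate (m * (2 ^ k - 1) + n) 0})) = 2 ^ (k - 1) * m + d"
    using MinE unfolding C'_def N_def L_def D_def .
  show ?thesis unfolding M
    using so codeC' opt gc assms(2)
    unfolding C_def C'_def N_def L_def D_def by blast
qed

end
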